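(* Let $\mathcal G$ be a good pseudogroup on a compact metric space $X$ with good generating set $\mathcal G_1$, and suppose the compacted generating set $\mathcal G_2$ is symmetric. Then every Borel probability measure $\mu$ on $X$ which is $\mathcal G$-invariant, ergodic and $(\mathcal G,\mathcal G_2)$-homogeneous, and whose local upper measure entropy $\overline{h}_\mu((\mathcal G,\mathcal G_2),x)$ is positive for every $x\in X$, is $(\mathcal G,\mathcal G_1)$-expansive.
   Context: $\mathrm{Homeo}(X)$: homeomorphisms $g:D_g\to R_g$ between open subsets of $X$, composed on natural domains $D_{h\circ g}=g^{-1}(D_h)$; $g(A)$ means $g(A\cap D_g)$. A pseudogroup is a subset of $\mathrm{Homeo}(X)$ containing $\mathrm{id}_X$, closed under composition, inversion, restriction to open subsets, and gluing along open covers of the domain. $\Gamma$ generates $\mathcal G$ if $\bigcup_{g\in\Gamma}(D_g\cup R_g)=X$ and $\mathcal G$ is exactly the set of $g\in\mathrm{Homeo}(X)$ locally equal near each point of $D_g$ to a finite composition of elements of $\Gamma$ and their inverses; $\Gamma$ is symmetric if it contains $\mathrm{id}_X$ and is closed under inverses. A finite symmetric generating set $\mathcal G_1$ is good if for each $g\in\mathcal G_1$ there is a compact $K_g\subset D_g$ such that $\mathcal G_2=\{g|_{\mathrm{int}(K_g)}:g\in\mathcal G_1\}$ still generates $\mathcal G$ ($\mathcal G_2$ is the compacted generating set; $\mathcal G$ is good if it has a good generating set). For $i=1,2$: $\mathcal G^i_n=\{h_1\circ\cdots\circ h_n:h_j\in\mathcal G_i\}$, $\mathcal G^{i,x}_n=\{g\in\mathcal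 G^i_n:x\in D_g\}$, $B^i_n(x,\varepsilon)=\{y:d(g(x),g(y))<\varepsilon\ \forall g\in\mathcal G^{i,x}_n\cap\mathcal G^{i,y}_n\}$, $\Phi^i_\delta(x)=\{y:d(g(x),g(y))\le\delta\ \forall n,\ \forall g\in\mathcal G^{i,x}_n\cap\mathcal G^{i,y}_n\}$. $\mu$ is $\mathcal G$-invariant if $\mu(g(A))=\mu(A)$ for all $g\in\mathcal G$ and Borel $A\subset D_g$; it is ergodic if every Borel $A$ with $g(A\cap D_g)\subset A$ for all $g\in\mathcal G$ has $\mu(A)\in\{0,1\}$. $\mu$ is $(\mathcal G,\mathcal G_2)$-homogeneous if $\mu(K)<\infty$ for compact $K$, some compact $K_0$ has $\mu(K_0)>0$, and for every $\varepsilon>0$ there are $\delta,c>0$ with $\mu(B^2_n(y,\delta))\le c\,\mu(B^2_n(x,\varepsilon))$ for all $n,x,y$. $\overline{h}_\mu((\mathcal G,\mathcal G_2),x)=\lim_{\varepsilon\to0}\limsup_{n\to\infty}-\frac1n\log\mu(B^2_n(x,\varepsilon))$. $\mu$ is $(\mathcal G,\mathcal G_1)$-expansive if there is $\delta>0$ with $\mu(\Phi^1_\delta(x))=0$ for all $x\in X$. *)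

theory Defs
  imports "HOL-Probability.Probability"
begin

text \<open>Partial maps of the ambient space (the type 'a, whose UNIV plays the role of X)
are represented as 'a \<rightharpoonup> 'a; the domain D_g is dom g and the range R_g is ran g.
Composition on natural domains is map composition, identity id_X is Some.\<close>

definition pval :: "('a \<rightharpoonup> 'a) \<Rightarrow> 'a \<Rightarrow> 'a" where
  "pval g x = the (g x)"

definition is_phomeo :: "('a::topological_space \<rightharpoonup> 'a) \<Rightarrow> bool" where
  "is_phomeo g \<longleftrightarrow> open (dom g) \<and> open (ran g) \<and>
     (\<exists>h. homeomorphism (dom g) (ran g) (pval g) h)"

definition pinv :: "('a \<rightharpoonup> 'a) \<Rightarrow> ('a \<rightharpoonup> 'a)" where
  "pinv g = (\<lambda>y. if y \<in> ran g then Some (THE x. g x = Some y) else None)"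

definition pimage :: "('a \<rightharpoonup> 'a) \<Rightarrow> 'a set \<Rightarrow> 'a set" where
  "pimage g A = pval g ` (A \<inter> dom g)"

text \<open>h_1 \<circ> ... \<circ> h_n for the list [h_1,...,h_n]\<close>
definition pcomp :: "('a \<rightharpoonup> 'a) list \<Rightarrow> ('a \<rightharpoonup> 'a)" where
  "pcomp hs = foldr (\<lambda>h acc. h \<circ>\<^sub>m acc) hs Some"

definition pseudogroup :: "('a::topological_space \<rightharpoonup> 'a) set \<Rightarrow> bool" where
  "pseudogroup G \<longleftrightarrow>
     G \<subseteq> {g. is_phomeo g} \<and>
     Some \<in> G \<and>
     (\<forall>g\<in>G. \<forall>h\<in>G. h \<circ>\<^sub>m g \<in> G) \<and>
     (\<forall>g\<in>G. pinv g \<in> G) \<and>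
     (\<forall>g\<in>G. \<forall>U. open U \<longrightarrow> g |` U \<in> G) \<and>
     (\<forall>g. is_phomeo g \<longrightarrow>
        (\<forall>x\<in>dom g. \<exists>U. open U \<and> x \<in> U \<and> U \<subseteq> dom g \<and> g |` U \<in> G) \<longrightarrow> g \<in> G)"

definition generates :: "('a::topological_space \<rightharpoonup> 'a) set \<Rightarrow> ('a \<rightharpoonup> 'a) set \<Rightarrow> bool" where
  "generates \<Gamma> G \<longleftrightarrow>
     \<Gamma> \<subseteq> {g. is_phomeo g} \<and>
     (\<Union>g\<in>\<Gamma>. dom g \<union> ran g) = UNIV \<and>
     G = {g. is_phomeo g \<and>
            (\<forall>x\<in>dom g. \<exists>U. open U \<and> x \<in> U \<and> U \<subseteq> dom g \<and>
               (\<exists>hs. hs \<noteq> [] \<and> set hs \<subseteq> \<Gamma> \<union> pinv ` \<Gamma> \<and>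
                     U \<subseteq> dom (pcomp hs) \<and> (\<forall>y\<in>U. g y = pcomp hs y)))}"

definition symmetric_set :: "('a \<rightharpoonup> 'a) set \<Rightarrow> bool" where
  "symmetric_set \<Gamma> \<longleftrightarrow> Some \<in> \<Gamma> \<and> (\<forall>g\<in>\<Gamma>. pinv g \<in> \<Gamma>)"

text \<open>good generating set G1 with chosen compacts K; G2 is the compacted generating set\<close>
definition compacted :: "('a \<rightharpoonup> 'a) set \<Rightarrow> (('a::topological_space \<rightharpoonup> 'a) \<Rightarrow> 'a set) \<Rightarrow> ('a \<rightharpoonup> 'a) set" where
  "compacted G1 K = (\<lambda>g. g |` interior (K g)) ` G1"

definition good_gen_set ::
  "('a::topological_space \<rightharpoonup> 'a) set \<Rightarrow> ('a \<rightharpoonup> 'a) set \<Rightarrow> (('a \<rightharpoonup> 'a) \<Rightarrow> 'a set) \<Rightarrow> bool" where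
  "good_gen_set G G1 K \<longleftrightarrow> finite G1 \<and> symmetric_set G1 \<and> generates G1 G \<and>
     (\<forall>g\<in>G1. compact (K g) \<and> K g \<subseteq> dom g) \<and> generates (compacted G1 K) G"

definition comps :: "('a \<rightharpoonup> 'a) set \<Rightarrow> nat \<Rightarrow> ('a \<rightharpoonup> 'a) set" where
  "comps \<Gamma> n = {pcomp hs | hs. set hs \<subseteq> \<Gamma> \<and> length hs = n}"

definition dyn_ball :: "('a::metric_space \<rightharpoonup> 'a) set \<Rightarrow> nat \<Rightarrow> 'a \<Rightarrow> real \<Rightarrow> 'a set" where
  "dyn_ball \<Gamma> n x \<epsilon> = {y. \<forall>g\<in>comps \<Gamma> n. x \<in> dom g \<and> y \<in> dom g \<longrightarrow>
                                  dist (pval g x) (pval g y) < \<epsilon>}"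

definition Phi_set :: "('a::metric_space \<rightharpoonup> 'a) set \<Rightarrow> real \<Rightarrow> 'a \<Rightarrow> 'a set" where
  "Phi_set \<Gamma> \<delta> x = {y. \<forall>n. \<forall>g\<in>comps \<Gamma> n. x \<in> dom g \<and> y \<in> dom g \<longrightarrow>
                                  dist (pval g x) (pval g y) \<le> \<delta>}"

definition invariant_measure :: "('a \<rightharpoonup> 'a) set \<Rightarrow> 'a measure \<Rightarrow> bool" where
  "invariant_measure G \<mu> \<longleftrightarrow>
     (\<forall>g\<in>G. \<forall>A\<in>sets \<mu>. A \<subseteq> dom g \<longrightarrow> emeasure \<mu> (pimage g A) = emeasure \<mu> A)"

definition ergodic_measure :: "('a \<rightharpoonup> 'a) set \<Rightarrow> 'a measure \<Rightarrow> bool" where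
  "ergodic_measure G \<mu> \<longleftrightarrow>
     (\<forall>A\<in>sets \<mu>. (\<forall>g\<in>G. pimage g A \<subseteq> A) \<longrightarrow> emeasure \<mu> A = 0 \<or> emeasure \<mu> A = 1)"

definition homogeneous_measure :: "('a::metric_space \<rightharpoonup> 'a) set \<Rightarrow> 'a measure \<Rightarrow> bool" where
  "homogeneous_measure G2 \<mu> \<longleftrightarrow>
     (\<forall>K. compact K \<longrightarrow> emeasure \<mu> K < \<infinity>) \<and>
     (\<exists>K0. compact K0 \<and> emeasure \<mu> K0 > 0) \<and>
     (\<forall>\<epsilon>>0. \<exists>\<delta>>0. \<exists>c>0. \<forall>n x y.
        measure \<mu> (dyn_ball G2 n y \<delta>) \<le> c * measure \<mu> (dyn_ball G2 n x \<epsilon>))"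

definition ent_term :: "('a::metric_space \<rightharpoonup> 'a) set \<Rightarrow> 'a measure \<Rightarrow> 'a \<Rightarrow> real \<Rightarrow> nat \<Rightarrow> ereal" where
  "ent_term G2 \<mu> x \<epsilon> n =
     (if measure \<mu> (dyn_ball G2 n x \<epsilon>) = 0 then \<infinity>
      else ereal (- ln (measure \<mu> (dyn_ball G2 n x \<epsilon>)) / real n))"

definition upper_local_entropy :: "('a::metric_space \<rightharpoonup> 'a) set \<Rightarrow> 'a measure \<Rightarrow> 'a \<Rightarrow> ereal" where
  "upper_local_entropy G2 \<mu> x =
     Lim (at_right (0::real)) (\<lambda>\<epsilon>. limsup (ent_term G2 \<mu> x \<epsilon>))"

definition expansive_measure :: "('a::metric_space \<rightharpoonup> 'a) set \<Rightarrow> 'a measure \<Rightarrow> bool" where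
  "expansive_measure G1 \<mu> \<longleftrightarrow> (\<exists>\<delta>>0. \<forall>x. measure \<mu> (Phi_set G1 \<delta> x) = 0)"

end

theory Submission
  imports Defs
begin

definition cpart :: "('a::topological_space \<rightharpoonup> 'a) \<Rightarrow> bool" where
  "cpart g \<longleftrightarrow> open (dom g) \<and> continuous_on (dom g) (pval g)"

lemma phomeo_cpart: "is_phomeo g \<Longrightarrow> cpart g"
  unfolding is_phomeo_def cpart_def homeomorphism_def by auto

lemma cpart_comp:
  assumes h: "cpart h" and a: "cpart a"
  shows "cpart (h \<circ>\<^sub>m a)"
proof -
  have d: "dom (h \<circ>\<^sub>m a) = dom a \<inter> pval a -` dom h"
    by (auto simp: map_comp_def pval_def split: option.splits)
  have o: "open (dom (h \<circ>\<^sub>m a))"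
    unfolding d using a h unfolding cpart_def by (intro continuous_open_preimage) auto
  have "continuous_on (dom (h \<circ>\<^sub>m a)) (pval h \<circ> pval a)"
  proof (rule continuous_on_compose)
    show "continuous_on (dom (h \<circ>\<^sub>m a)) (pval a)"
      using a unfolding cpart_def d by (auto intro: continuous_on_subset)
    show "continuous_on (pval a ` dom (h \<circ>\<^sub>m a)) (pval h)"
      using h unfolding cpart_def d by (auto intro: continuous_on_subset)
  qed
  moreover have "\<And>x. x \<in> dom (h \<circ>\<^sub>m a) \<Longrightarrow> pval (h \<circ>\<^sub>m a) x = (pval h \<circ> pval a) x"
    by (auto simp: map_comp_def pval_def split: option.splits)
  ultimately have "continuous_on (dom (h \<circ>\<^sub>m a)) (pval (h \<circ>\<^sub>m a))"
    using continuous_on_cong by blast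
  with o show ?thesis unfolding cpart_def by simp
qed

lemma cpart_pcomp: "set hs \<subseteq> {g. is_phomeo g} \<Longrightarrow> cpart (pcomp hs)"
proof (induction hs)
  case Nil
  show ?case by (simp add: pcomp_def cpart_def pval_def continuous_on_id)
next
  case (Cons h hs)
  then show ?case
    by (simp add: pcomp_def) (metis cpart_comp phomeo_cpart pcomp_def)
qed

lemma finite_comps: "finite \<Gamma> \<Longrightarrow> finite (comps \<Gamma> n)"
proof -
  assume f: "finite \<Gamma>"
  have "comps \<Gamma> n = pcomp ` {hs. set hs \<subseteq> \<Gamma> \<and> length hs = n}"
    by (auto simp: comps_def)
  then show ?thesis using finite_lists_length_eq[OF f] by simp
qed

lemma dyn_ball_borel:
  fixes \<Gamma> :: "('a::metric_space \<rightharpoonup> 'a) set"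
  assumes f: "finite \<Gamma>" and ph: "\<Gamma> \<subseteq> {g. is_phomeo g}"
  shows "dyn_ball \<Gamma> n x e \<in> sets borel"
proof -
  define S where "S g = {y. x \<in> dom g \<and> y \<in> dom g \<longrightarrow> dist (pval g x) (pval g y) < e}" for g
  have eq: "dyn_ball \<Gamma> n x e = UNIV \<inter> (\<Inter>g\<in>comps \<Gamma> n. S g)"
    by (auto simp: dyn_ball_def S_def)
  have "S g \<in> sets borel" if g: "g \<in> comps \<Gamma> n" for g
  proof -
    from g obtain hs where hs: "g = pcomp hs" "set hs \<subseteq> \<Gamma>" by (auto simp: comps_def)
    have c: "cpart g" using hs ph cpart_pcomp by blast
    show ?thesis
    proof (cases "x \<in> dom g")
      case False
      then have "S g = UNIV" by (auto simp: S_def)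
      then show ?thesis by simp
    next
      case True
      have "S g = (- dom g) \<union> (dom g \<inter> pval g -` ball (pval g x) e)"
        using True by (auto simp: S_def)
      moreover have "open (dom g \<inter> pval g -` ball (pval g x) e)"
        using c unfolding cpart_def by (intro continuous_open_preimage) auto
      moreover have "closed (- dom g)" using c unfolding cpart_def by auto
      ultimately show ?thesis by auto
    qed
  qed
  then show ?thesis unfolding eq
    using finite_comps[OF f] by (cases "comps \<Gamma> n = {}") (auto intro!: sets.finite_INT)
qed

lemma map_comp_le: "h1 \<subseteq>\<^sub>m h2 \<Longrightarrow> a1 \<subseteq>\<^sub>m a2 \<Longrightarrow> (h1 \<circ>\<^sub>m a1) \<subseteq>\<^sub>m (h2 \<circ>\<^sub>m a2)"
  unfolding map_le_def map_comp_def
  by (fastforce simp: dom_def split: option.splits)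

lemma pcomp_le: "list_all2 (\<lambda>h h'. h \<subseteq>\<^sub>m h') hs hs' \<Longrightarrow> pcomp hs \<subseteq>\<^sub>m pcomp hs'"
proof (induction hs hs' rule: list_all2_induct)
  case Nil
  then show ?case by (simp add: pcomp_def)
next
  case (Cons x xs y ys)
  then show ?case by (simp add: pcomp_def map_comp_le)
qed

lemma compacted_sub:
  assumes g: "g \<in> comps (compacted G1 K) n"
  shows "\<exists>g'\<in>comps G1 n. g \<subseteq>\<^sub>m g'"
proof -
  from g obtain hs where hs: "g = pcomp hs" "set hs \<subseteq> compacted G1 K" "length hs = n"
    by (auto simp: comps_def)
  define f where "f h = (SOME g'. g' \<in> G1 \<and> h = g' |` interior (K g'))" for h
  have fh: "f h \<in> G1 \<and> h = f h |` interior (K (f h))" if "h \<in> compacted G1 K" for h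
  proof -
    from that obtain g' where "g' \<in> G1 \<and> h = g' |` interior (K g')"
      by (auto simp: compacted_def)
    then show ?thesis unfolding f_def by (metis (mono_tags, lifting) someI)
  qed
  have "list_all2 (\<lambda>h h'. h \<subseteq>\<^sub>m h') hs (map f hs)"
    using hs(2) fh
  proof (induction hs)
    case (Cons a hs)
    have "a = f a |` interior (K (f a))" using Cons by auto
    then have "a \<subseteq>\<^sub>m f a" unfolding map_le_def restrict_map_def by (metis domIff)
    then show ?case using Cons by auto
  qed auto
  then have "g \<subseteq>\<^sub>m pcomp (map f hs)" using hs pcomp_le by blast
  moreover have "pcomp (map f hs) \<in> comps G1 n"
    using hs fh unfolding comps_def by force
  ultimately show ?thesis by blast
qed

lemma Phi_sub_dyn:
  assumes "d < d'"
  shows "Phi_set G1 d y \<subseteq> dyn_ball (compacted G1 K) n y d'"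
proof
  fix z assume z: "z \<in> Phi_set G1 d y"
  show "z \<in> dyn_ball (compacted G1 K) n y d'"
    unfolding dyn_ball_def
  proof (intro CollectI ballI impI)
    fix g assume g: "g \<in> comps (compacted G1 K) n" and yz: "y \<in> dom g \<and> z \<in> dom g"
    from compacted_sub[OF g] obtain g' where g': "g' \<in> comps G1 n" "g \<subseteq>\<^sub>m g'" by blast
    have "g' y = g y" "g' z = g z" using g'(2) yz unfolding map_le_def by auto
    then have "y \<in> dom g' \<and> z \<in> dom g'" "pval g y = pval g' y" "pval g z = pval g' z"
      using yz by (auto simp: pval_def)
    then show "dist (pval g y) (pval g z) < d'"
      using z g'(1) assms unfolding Phi_set_def by fastforce
  qed
qed

theorem mainTheorem16:
  fixes G G1 :: "('a::metric_space \<rightharpoonup> 'a) set"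
    and K :: "('a \<rightharpoonup> 'a) \<Rightarrow> 'a set"
    and \<mu> :: "'a measure"
  assumes "compact (UNIV :: 'a set)"
    and "pseudogroup G"
    and "good_gen_set G G1 K"
    and "symmetric_set (compacted G1 K)"
    and "prob_space \<mu>" and "sets \<mu> = sets borel"
    and "invariant_measure G \<mu>"
    and "ergodic_measure G \<mu>"
    and "homogeneous_measure (compacted G1 K) \<mu>"
    and "\<forall>x. upper_local_entropy (compacted G1 K) \<mu> x > 0"
  shows "expansive_measure G1 \<mu>"
proof (rule ccontr)
  assume ne: "\<not> expansive_measure G1 \<mu>"
  let ?G2 = "compacted G1 K"
  interpret P: prob_space \<mu> by fact
  have fin: "finite ?G2" using assms(3) by (auto simp: good_gen_set_def compacted_def)
  have ph: "?G2 \<subseteq> {g. is_phomeo g}" using assms(3) by (auto simp: good_gen_set_def generates_def)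
  have meas: "\<And>n x e. dyn_ball ?G2 n x e \<in> sets \<mu>" using dyn_ball_borel[OF fin ph] assms(6) by simp
  define x0 :: 'a where "x0 = undefined"
  define F where "F = (\<lambda>e. limsup (ent_term ?G2 \<mu> x0 e))"
  have F0: "F e = 0" if e: "e > 0" for e
  proof -
    obtain d c where d: "d > 0" "c > 0"
      and hc: "\<And>n x y. measure \<mu> (dyn_ball ?G2 n y d) \<le> c * measure \<mu> (dyn_ball ?G2 n x e)"
      using assms(9) e unfolding homogeneous_measure_def by meson
    have "d / 2 > 0" using d by simp
    with ne obtain y where my: "measure \<mu> (Phi_set G1 (d/2) y) \<noteq> 0"
      unfolding expansive_measure_def by blast
    define m where "m = measure \<mu> (Phi_set G1 (d/2) y)"
    have mpos: "m > 0" using my unfolding m_def by (simp add: order_less_le)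
    have lb: "m / c \<le> measure \<mu> (dyn_ball ?G2 n x0 e)" for n
    proof -
      have "m \<le> measure \<mu> (dyn_ball ?G2 n y d)"
        unfolding m_def using Phi_sub_dyn[of "d/2" d G1 y K n] d meas
        by (intro P.finite_measure_mono) auto
      also have "\<dots> \<le> c * measure \<mu> (dyn_ball ?G2 n x0 e)" by (rule hc)
      finally show ?thesis using d by (simp add: divide_le_eq mult.commute)
    qed
    define b where "b n = measure \<mu> (dyn_ball ?G2 n x0 e)" for n
    have bpos: "b n > 0" for n using lb[of n] mpos d unfolding b_def
      by (meson divide_pos_pos less_le_trans)
    have b1: "b n \<le> 1" for n unfolding b_def by (rule P.prob_le_1)
    define L where "L = - ln (m/c)"
    have ent: "ent_term ?G2 \<mu> x0 e n = ereal (- ln (b n) / real n)" for n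
      using bpos[of n] unfolding ent_term_def b_def by simp
    have lnb: "0 \<le> - ln (b n) \<and> - ln (b n) \<le> L" for n
    proof -
      have "ln (b n) \<le> 0" using bpos[of n] b1[of n] by simp
      moreover have "ln (m/c) \<le> ln (b n)" using lb[of n] bpos[of n] mpos d unfolding b_def
        by simp
      ultimately show ?thesis unfolding L_def by simp
    qed
    have "(\<lambda>n. - ln (b n) / real n) \<longlonglongrightarrow> 0"
    proof (rule tendsto_sandwich[of "\<lambda>_. 0" _ _ "\<lambda>n. L / real n"])
      show "eventually (\<lambda>n. 0 \<le> - ln (b n) / real n) sequentially"
        using lnb by (intro always_eventually allI divide_nonneg_nonneg) auto
      show "eventually (\<lambda>n. - ln (b n) / real n \<le> L / real n) sequentially"
        using lnb by (intro always_eventually allI divide_right_mono) auto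
      show "(\<lambda>n. 0::real) \<longlonglongrightarrow> 0" by simp
      show "(\<lambda>n. L / real n) \<longlonglongrightarrow> 0" by (rule lim_const_over_n)
    qed
    then have "(\<lambda>n. ereal (- ln (b n) / real n)) \<longlonglongrightarrow> ereal 0" by (rule tendsto_ereal)
    then show ?thesis unfolding F_def ent zero_ereal_def by (intro lim_imp_Limsup) auto
  qed
  have "(F \<longlongrightarrow> 0) (at_right 0)"
    by (rule tendsto_eventually, rule eventually_at_rightI[of 0 1]) (auto simp: F0)
  then have "upper_local_entropy ?G2 \<mu> x0 = 0"
    unfolding upper_local_entropy_def F_def[symmetric] by (intro tendsto_Lim) auto
  with assms(10) show False by (metis less_irrefl)
qed

end
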